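(* Let $E\subset\mathbb R^+$. Then $$\mathrm{Dim}_\mathrm{H}E=\inf\ \mathrm{Dim}_\mathrm{H}\Big(\bigcup_{n\ge1}\bigcup_{R\in\mathcal R_n}R\Big),$$ where the infimum is taken over all families $(\mathcal R_n)_{n\ge1}$ such that, for each $n$, $\mathcal R_n$ is a family of intervals with integer endpoints, each of length a (positive integer) multiple of $n^2$, which covers $E\cap\mathcal S_n$.
   Context: $|Q|$ denotes the length of an interval $Q$. Let $\mathcal S_n=[2^{n-1},2^n)$ for $n\ge1$. For $E\subset\mathbb R^+$, $\rho\ge0$ and $n\ge1$, let $$\nu^n_\rho(E)=\inf\Big\{\sum_{i=1}^m\Big(\frac{|Q_i|}{2^n}\Big)^\rho: Q_i\subset\mathcal S_n \text{ non-trivial intervals with integer endpoints},\ E\cap\mathcal S_n\subset\bigcup_{i=1}^m Q_i\Big\},$$ the infimum being over finite families. The macroscopic Hausdorff dimension is $\mathrm{Dim}_\mathrm{H}E=\inf\{\rho\ge0:\sum_{n\ge1}\nu^n_\rho(E)<\infty\}$. *)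

theory Defs
  imports "HOL-Analysis.Analysis"
begin

definition shell :: "nat \<Rightarrow> real set" where
  "shell n = {2 ^ (n - 1) ..< 2 ^ n}"

definition int_interval :: "real set \<Rightarrow> bool" where
  "int_interval Q \<longleftrightarrow> is_interval Q \<and> bounded Q \<and> Inf Q \<in> \<int> \<and> Sup Q \<in> \<int> \<and> Inf Q < Sup Q"

definition ilen :: "real set \<Rightarrow> real" where
  "ilen Q = Sup Q - Inf Q"

definition nu :: "nat \<Rightarrow> real \<Rightarrow> real set \<Rightarrow> real" where
  "nu n \<rho> E = Inf {(\<Sum>Q\<in>F. (ilen Q / 2 ^ n) powr \<rho>) | F.
      finite F \<and> (\<forall>Q\<in>F. int_interval Q \<and> Q \<subseteq> shell n) \<and> E \<inter> shell n \<subseteq> \<Union>F}"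

definition DimH :: "real set \<Rightarrow> real" where
  "DimH E = Inf {\<rho>. 0 \<le> \<rho> \<and> summable (\<lambda>n. nu (Suc n) \<rho> E)}"

end

theory Submission
  imports Defs "HOL-Real_Asymp.Real_Asymp"
begin

definition cov :: "nat \<Rightarrow> real set \<Rightarrow> real set set \<Rightarrow> bool" where
 "cov n X F \<longleftrightarrow> finite F \<and> (\<forall>Q\<in>F. int_interval Q \<and> Q \<subseteq> shell n) \<and> X \<inter> shell n \<subseteq> \<Union>F"

definition cost :: "nat \<Rightarrow> real \<Rightarrow> real set set \<Rightarrow> real" where
 "cost n \<rho> F = (\<Sum>Q\<in>F. (ilen Q / 2 ^ n) powr \<rho>)"

lemma nu_alt: "nu n \<rho> X = Inf (cost n \<rho> ` {F. cov n X F})"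
  unfolding nu_def cost_def cov_def by (rule arg_cong[where f=Inf]) auto

lemma int_interval_co: "a \<in> \<int> \<Longrightarrow> b \<in> \<int> \<Longrightarrow> a < b \<Longrightarrow> int_interval {a..<b}"
  unfolding int_interval_def by (auto intro: bounded_subset[of "{a..b}"])

lemma ilen_co: "a < b \<Longrightarrow> ilen {a..<b} = b - a"
  unfolding ilen_def by simp

lemma int_interval_cc: "a \<in> \<int> \<Longrightarrow> b \<in> \<int> \<Longrightarrow> a < b \<Longrightarrow> int_interval {a..b}"
  unfolding int_interval_def by auto

lemma ilen_cc: "a \<le> b \<Longrightarrow> ilen {a..b} = b - a"
  unfolding ilen_def by simp

definition U :: "nat \<Rightarrow> real set set" where
  "U n = (\<lambda>j::nat. {real j..<real j+1}) ` {2^(n-1)..<2^n}"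

lemma cov_U: "cov n X (U n)"
  unfolding cov_def U_def
proof (intro conjI)
  show "finite ((\<lambda>j::nat. {real j..<real j+1}) ` {2^(n-1)..<2^n})" by simp
next
  show "\<forall>Q\<in>(\<lambda>j::nat. {real j..<real j+1}) ` {2^(n-1)..<2^n}. int_interval Q \<and> Q \<subseteq> shell n"
  proof
  fix Q assume "Q \<in> (\<lambda>j::nat. {real j..<real j+1}) ` {2^(n-1)..<2^n}"
  then obtain j::nat where j: "j \<in> {2^(n-1)..<2^n}" "Q = {real j..<real j+1}" by auto
  show "int_interval Q \<and> Q \<subseteq> shell n"
  proof
    show "int_interval Q" using j by (auto intro!: int_interval_co)
    have j1: "2^(n-1) \<le> j" "j+1 \<le> 2^n" using j(1) by auto
    then have "real (2^(n-1)) \<le> real j" "real (j+1) \<le> real (2^n)" by (simp_all only: of_nat_le_iff)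
    then have "real j \<ge> 2^(n-1)" "real j + 1 \<le> 2^n" by simp_all
    then show "Q \<subseteq> shell n" unfolding shell_def j(2) by auto
  qed
  qed
next
  show "X \<inter> shell n \<subseteq> \<Union> ((\<lambda>j::nat. {real j..<real j+1}) ` {2^(n-1)..<2^n})"
  proof
    fix x assume "x \<in> X \<inter> shell n"
    then have x: "2^(n-1) \<le> x" "x < 2^n" unfolding shell_def by auto
    define j where "j = nat (floor x)"
    have "(0::real) < 2^(n-1)" by simp
    then have "x \<ge> 0" using x(1) by linarith
    then have rj: "real j = of_int (floor x)" unfolding j_def by simp
    have "real j \<le> x" "x < real j + 1" unfolding rj by linarith+
    moreover have "2^(n-1) \<le> j"
    proof -
      have "int (2^(n-1)) \<le> floor x" using x(1) by (simp add: le_floor_iff)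
      then show ?thesis unfolding j_def by linarith
    qed
    moreover have "j < 2^n"
    proof -
      have "real j < 2^n" using \<open>real j \<le> x\<close> x(2) by linarith
      then have "real j < real (2^n)" by simp
      then show ?thesis by (simp only: of_nat_less_iff)
    qed
    ultimately show "x \<in> \<Union> ((\<lambda>j::nat. {real j..<real j+1}) ` {2^(n-1)..<2^n})" by auto
  qed
qed

lemma cost_nonneg: "0 \<le> cost n \<rho> F"
  unfolding cost_def by (intro sum_nonneg) auto

lemma nu_ne: "cost n \<rho> ` {F. cov n X F} \<noteq> {}"
  using cov_U[of n X] by auto

lemma nu_bdd: "bdd_below (cost n \<rho> ` {F. cov n X F})"
  by (rule bdd_belowI[of _ 0]) (auto simp: cost_nonneg)

lemma nu_nonneg: "0 \<le> nu n \<rho> X"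
  unfolding nu_alt by (rule cInf_greatest[OF nu_ne]) (auto simp: cost_nonneg)

lemma nu_le: "cov n X F \<Longrightarrow> nu n \<rho> X \<le> cost n \<rho> F"
  unfolding nu_alt by (rule cInf_lower[OF _ nu_bdd]) auto

lemma nu_approx: assumes "\<delta> > 0" shows "\<exists>F. cov n X F \<and> cost n \<rho> F < nu n \<rho> X + \<delta>"
proof -
  have "Inf (cost n \<rho> ` {F. cov n X F}) < nu n \<rho> X + \<delta>" using assms unfolding nu_alt by simp
  from cInf_lessD[OF nu_ne this] show ?thesis by auto
qed

lemma nu_mono: assumes "X \<inter> shell n \<subseteq> Y" shows "nu n \<rho> X \<le> nu n \<rho> Y"
proof -
  have "nu n \<rho> X \<le> cost n \<rho> F" if "cov n Y F" for F
    using that assms by (intro nu_le) (auto simp: cov_def)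
  then show ?thesis unfolding nu_alt[of n \<rho> Y] by (intro cInf_greatest[OF nu_ne]) auto
qed

lemma nu2: "nu n 2 X \<le> (1/2)^n"
proof -
  have "nu n 2 X \<le> cost n 2 (U n)" by (rule nu_le[OF cov_U])
  also have "cost n 2 (U n) \<le> (\<Sum>j\<in>{2^(n-1)..<(2::nat)^n}. (1 / 2^n) powr 2)"
    unfolding cost_def U_def
    by (rule order_trans[OF sum_image_le]) (auto simp: ilen_co)
  also have "\<dots> = real (2^n - 2^(n-1)) * (1/2^n)^2" by simp
  also have "\<dots> \<le> real ((2::nat)^n) * (1/2^n)^2"
    by (intro mult_right_mono) auto
  also have "\<dots> = (1/2)^n" by (simp add: power2_eq_square power_divide)
  finally show ?thesis .
qed

definition D :: "real set \<Rightarrow> real set" where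
  "D X = {\<rho>. 0 \<le> \<rho> \<and> summable (\<lambda>n. nu (Suc n) \<rho> X)}"

lemma DimH_D: "DimH X = Inf (D X)" unfolding DimH_def D_def by simp

lemma two_D: "2 \<in> D X"
proof -
  have "summable (\<lambda>n. nu (Suc n) 2 X)"
  proof (rule summable_comparison_test'[of "\<lambda>n. (1/2::real)^(Suc n)"])
    show "summable (\<lambda>n. (1/2::real)^(Suc n))" by (simp add: summable_geometric)
    show "norm (nu (Suc n) 2 X) \<le> (1/2)^(Suc n)" for n using nu2[of "Suc n" X] nu_nonneg[of "Suc n" 2 X] by simp
  qed
  then show ?thesis unfolding D_def by simp
qed

lemma D_bdd: "bdd_below (D X)" unfolding D_def by (rule bdd_belowI[of _ 0]) auto

lemma DimH_nonneg: "0 \<le> DimH X"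
proof -
  have "D X \<noteq> {}" using two_D[of X] by blast
  then show ?thesis unfolding DimH_D by (rule cInf_greatest) (auto simp: D_def)
qed


lemma lim_aux: "0 < (\<epsilon>::real) \<Longrightarrow> 0 \<le> (r::real) \<Longrightarrow> (\<lambda>m::nat. (4 * real m^2) powr r / 2 powr (real m * \<epsilon>)) \<longlonglongrightarrow> 0"
  by real_asymp

lemma cost_bound:
  fixes \<rho>0 \<epsilon> :: real
  assumes r0: "0 \<le> \<rho>0" and e: "0 < \<epsilon>"
  obtains C where "C \<ge> 0" "\<And>(m::nat) l t. 1 \<le> l \<Longrightarrow> l \<le> 2^m \<Longrightarrow> 0 \<le> t \<Longrightarrow> t \<le> l + 2 * real m^2
      \<Longrightarrow> t \<le> 2^m \<Longrightarrow> (t/2^m) powr (\<rho>0+\<epsilon>) \<le> C * (l/2^m) powr \<rho>0"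
proof -
  define r where "r = \<rho>0 + \<epsilon>"
  have r: "0 \<le> r" "\<rho>0 \<le> r" using r0 e unfolding r_def by auto
  have "Bseq (\<lambda>m::nat. (4 * real m^2) powr r / 2 powr (real m * \<epsilon>))"
    using lim_aux[OF e r(1)] by (intro convergent_imp_Bseq) (auto simp: convergent_def)
  then obtain K where K: "K > 0" "\<And>m::nat. norm ((4 * real m^2) powr r / 2 powr (real m * \<epsilon>)) \<le> K"
    by (auto elim: BseqE)
  define C where "C = max (2 powr r) K"
  have "C \<ge> 0" unfolding C_def using K by auto
  moreover have "(t/2^m) powr r \<le> C * (l/2^m) powr \<rho>0"
    if l: "1 \<le> l" "l \<le> 2^m" and t: "0 \<le> t" "t \<le> l + 2 * real m^2" "t \<le> 2^m" for m :: nat and l t :: real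
  proof -
    have p: "(0::real) < 2^m" by simp
    have x01: "0 \<le> l/2^m" "l/2^m \<le> 1" using l p by auto
    have y0: "0 \<le> t/2^m" using t p by auto
    show ?thesis
    proof (cases "l \<ge> 2 * real m^2")
      case True
      then have "t/2^m \<le> 2 * (l/2^m)" using t p by (simp add: divide_right_mono)
      then have "(t/2^m) powr r \<le> (2 * (l/2^m)) powr r" using y0 r by (intro powr_mono2) auto
      also have "\<dots> = 2 powr r * (l/2^m) powr r" using x01 by (subst powr_mult) auto
      also have "\<dots> \<le> 2 powr r * (l/2^m) powr \<rho>0"
        using x01 r by (intro mult_left_mono powr_mono') auto
      also have "\<dots> \<le> C * (l/2^m) powr \<rho>0" unfolding C_def by (intro mult_right_mono) auto
      finally show ?thesis .
    next
      case False
      then have "t \<le> 4 * real m^2" using t by linarith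
      then have "t/2^m \<le> (4 * real m^2) / 2^m" using p by (simp add: divide_right_mono)
      then have "(t/2^m) powr r \<le> ((4 * real m^2) / 2^m) powr r" using y0 r by (intro powr_mono2) auto
      also have "\<dots> = (4 * real m^2) powr r / (2 powr real m) powr r"
        by (simp add: powr_divide powr_realpow)
      also have "(2 powr real m) powr r = 2 powr (real m * \<epsilon>) * 2 powr (real m * \<rho>0)"
        by (simp add: powr_powr r_def algebra_simps powr_add)
      finally have A: "(t/2^m) powr r \<le> ((4 * real m^2) powr r / 2 powr (real m * \<epsilon>)) * (1 / 2 powr (real m * \<rho>0))"
        by simp
      have B: "(4 * real m^2) powr r / 2 powr (real m * \<epsilon>) \<le> K" using K(2)[of m] by simp
      have "1 / 2 powr (real m * \<rho>0) = (1/2^m) powr \<rho>0"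
        by (simp add: powr_divide powr_realpow[symmetric] powr_powr)
      also have "\<dots> \<le> (l/2^m) powr \<rho>0" using l r0 p by (intro powr_mono2) (auto simp: divide_right_mono)
      finally have Cc: "1 / 2 powr (real m * \<rho>0) \<le> (l/2^m) powr \<rho>0" .
      have "(t/2^m) powr r \<le> K * (l/2^m) powr \<rho>0"
        by (rule order_trans[OF A mult_mono[OF B Cc]]) (use K(1) in auto)
      also have "\<dots> \<le> C * (l/2^m) powr \<rho>0" unfolding C_def by (intro mult_right_mono) auto
      finally show ?thesis .
    qed
  qed
  ultimately show ?thesis using that unfolding r_def by blast
qed


lemma Ints_pos_ge1: "(x::real) \<in> \<int> \<Longrightarrow> 0 < x \<Longrightarrow> 1 \<le> x"
  by (elim Ints_cases) auto

lemma Qfacts: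
  assumes "int_interval Q" "Q \<subseteq> shell n" "Q \<noteq> {}"
  shows "Inf Q \<in> \<int>" "Sup Q \<in> \<int>" "1 \<le> ilen Q" "Q \<subseteq> {Inf Q..Sup Q}" "2^(n-1) \<le> Inf Q"
        "Sup Q \<le> 2^n" "ilen Q = Sup Q - Inf Q"
proof -
  show i1: "Inf Q \<in> \<int>" "Sup Q \<in> \<int>" using assms(1) unfolding int_interval_def by auto
  show "ilen Q = Sup Q - Inf Q" unfolding ilen_def ..
  show "1 \<le> ilen Q" unfolding ilen_def using assms(1) unfolding int_interval_def
    by (intro Ints_pos_ge1) auto
  have sh: "\<And>x. x \<in> Q \<Longrightarrow> 2^(n-1) \<le> x \<and> x < 2^n" using assms(2) unfolding shell_def by auto
  have bb: "bdd_below Q" "bdd_above Q"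
    by (rule bdd_belowI[of _ "2^(n-1)"], use sh in auto) (rule bdd_aboveI[of _ "2^n"], use sh in \<open>auto intro: less_imp_le\<close>)
  show "Q \<subseteq> {Inf Q..Sup Q}" using bb by (auto intro: cInf_lower cSup_upper)
  show "2^(n-1) \<le> Inf Q" using sh assms(3) by (intro cInf_greatest) auto
  show "Sup Q \<le> 2^n" using sh assms(3) by (intro cSup_least) (auto intro: less_imp_le)
qed

definition kk :: "nat \<Rightarrow> real set \<Rightarrow> nat" where
  "kk n Q = nat \<lceil>ilen Q / real n^2\<rceil>"

lemma kk_facts:
  assumes "1 \<le> n" "0 < ilen Q"
  shows "1 \<le> kk n Q" "ilen Q \<le> real (kk n Q * n^2)" "real (kk n Q * n^2) < ilen Q + real n^2"
proof -
  define l where "l = ilen Q"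
  have n2: "0 < real n^2" using assms by simp
  have c0: "0 < \<lceil>l / real n^2\<rceil>" using assms n2 unfolding l_def by simp
  then have rk: "real (kk n Q) = of_int \<lceil>l / real n^2\<rceil>" unfolding kk_def l_def by simp
  show "1 \<le> kk n Q" using c0 unfolding kk_def l_def by linarith
  have "l / real n^2 \<le> real (kk n Q)" unfolding rk by linarith
  then have "l \<le> real (kk n Q) * real n^2" using n2 by (simp add: divide_le_eq)
  then show "ilen Q \<le> real (kk n Q * n^2)" unfolding l_def by simp
  have "real (kk n Q) < l / real n^2 + 1" unfolding rk by linarith
  then have "real (kk n Q) * real n^2 < (l / real n^2 + 1) * real n^2" using n2 by (intro mult_strict_right_mono)
  also have "\<dots> = l + real n^2" using n2 by (simp add: field_simps)
  finally show "real (kk n Q * n^2) < ilen Q + real n^2" unfolding l_def by simp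
qed

definition PP :: "nat \<Rightarrow> real set \<Rightarrow> real set" where
  "PP n Q = {Inf Q .. Inf Q + real (kk n Q * n^2)}"

definition JJ :: "nat \<Rightarrow> nat \<Rightarrow> real set \<Rightarrow> real set" where
  "JJ m n Q = {max (Inf Q) (2^(m-1)) ..< min (Inf Q + real (kk n Q * n^2) + 1) (2^m)}"

definition okJ :: "nat \<Rightarrow> nat \<Rightarrow> real set \<Rightarrow> bool" where
  "okJ m n Q \<longleftrightarrow> max (Inf Q) (2^(m-1)) < min (Inf Q + real (kk n Q * n^2) + 1) (2^m)"

lemma pow_sq: "4 \<le> n \<Longrightarrow> n^2 \<le> (2::nat)^n"
proof (induction n rule: dec_induct)
  case base then show ?case by simp
next
  case (step n)
  have "(Suc n)^2 = n^2 + 2*n + 1" by (simp add: power2_eq_square)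
  also have "\<dots> \<le> n^2 + n^2"
  proof -
    have "4*n \<le> n*n" using step(1) by (intro mult_right_mono) auto
    then show ?thesis using step(1) unfolding power2_eq_square by linarith
  qed
  also have "\<dots> \<le> 2^(Suc n)" using step(3) by simp
  finally show ?case .
qed

lemma far: "n + 2 \<le> m \<Longrightarrow> 6 \<le> m \<Longrightarrow> (2::real)^n + real n^2 \<le> 2^(m-1)"
proof -
  assume a: "n + 2 \<le> m" "6 \<le> m"
  have "(2::nat)^n + n^2 \<le> 2^(m-1)"
  proof (cases "n \<le> 3")
    case True
    have "(2::nat)^n \<le> 2^3" using True by (intro power_increasing) auto
    moreover have "n^2 \<le> 3^2" using True by (intro power_mono) auto
    moreover have "(2::nat)^5 \<le> 2^(m-1)" using a by (intro power_increasing) auto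
    ultimately show ?thesis by simp
  next
    case False
    then have "n^2 \<le> (2::nat)^n" by (intro pow_sq) auto
    then have "(2::nat)^n + n^2 \<le> 2^(Suc n)" by simp
    also have "\<dots> \<le> 2^(m-1)" using a by (intro power_increasing) auto
    finally show ?thesis .
  qed
  then have "real ((2::nat)^n + n^2) \<le> real (2^(m-1))" by (simp only: of_nat_le_iff)
  then show ?thesis by simp
qed


locale Qctx =
  fixes n :: nat and Q :: "real set"
  assumes n1: "1 \<le> n" and ii: "int_interval Q" and sub: "Q \<subseteq> shell n" and ne: "Q \<noteq> {}"
begin

lemmas QF = Qfacts[OF ii sub ne]

lemma KF: "1 \<le> kk n Q" "ilen Q \<le> real (kk n Q * n^2)" "real (kk n Q * n^2) < ilen Q + real n^2"
  using kk_facts[OF n1] QF(3) by auto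

lemma Q_sub_P: "Q \<subseteq> PP n Q"
  using QF KF unfolding PP_def by force

lemma P_ok: "int_interval (PP n Q) \<and> (\<exists>k::nat. k \<ge> 1 \<and> ilen (PP n Q) = real (k * n ^ 2))"
proof -
  have pos: "0 < real (kk n Q * n^2)" using KF QF(3) by linarith
  have "int_interval (PP n Q)" unfolding PP_def using QF(1) pos
    by (intro int_interval_cc) auto
  moreover have "ilen (PP n Q) = real (kk n Q * n^2)" unfolding PP_def using pos by (simp add: ilen_cc)
  ultimately show ?thesis using KF(1) by blast
qed

lemma J_cover: assumes "x \<in> PP n Q" "x \<in> shell m" "1 \<le> m" shows "okJ m n Q" "x \<in> JJ m n Q"
  using assms unfolding PP_def shell_def okJ_def JJ_def by auto

lemma J_props: assumes "okJ m n Q"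
  shows "int_interval (JJ m n Q)" "JJ m n Q \<subseteq> shell m" "0 \<le> ilen (JJ m n Q)"
    "ilen (JJ m n Q) \<le> real (kk n Q * n^2) + 1" "ilen (JJ m n Q) \<le> 2^m"
proof -
  have I: "Inf Q \<in> \<int>" by (rule QF(1))
  have "max (Inf Q) (2^(m-1)) \<in> \<int>" using I by (simp add: max_def)
  moreover have "min (Inf Q + real (kk n Q * n^2) + 1) (2^m) \<in> \<int>" using I by (simp add: min_def)
  ultimately show "int_interval (JJ m n Q)" unfolding JJ_def using assms unfolding okJ_def
    by (intro int_interval_co) auto
  show "JJ m n Q \<subseteq> shell m" unfolding JJ_def shell_def by auto
  have L: "ilen (JJ m n Q) = min (Inf Q + real (kk n Q * n^2) + 1) (2^m) - max (Inf Q) (2^(m-1))"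
    unfolding JJ_def using assms unfolding okJ_def by (simp add: ilen_co)
  show "0 \<le> ilen (JJ m n Q)" using L assms unfolding okJ_def by linarith
  show "ilen (JJ m n Q) \<le> real (kk n Q * n^2) + 1" using L by linarith
  have "(0::real) \<le> 2^(m-1)" by simp
  then show "ilen (JJ m n Q) \<le> 2^m" using L by linarith
qed

lemma location: assumes "x \<in> PP n Q" "x \<in> shell m" "6 \<le> m" shows "n \<le> m" "m \<le> n + 1"
proof -
  have x: "Inf Q \<le> x" "x \<le> Inf Q + real (kk n Q * n^2)" "2^(m-1) \<le> x" "x < 2^m"
    using assms unfolding PP_def shell_def by auto
  show "n \<le> m"
  proof (rule ccontr)
    assume "\<not> n \<le> m"
    then have "(2::real)^m \<le> 2^(n-1)" by (intro power_increasing) auto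
    then show False using x QF(5) by linarith
  qed
  show "m \<le> n + 1"
  proof (rule ccontr)
    assume "\<not> m \<le> n + 1"
    then have "(2::real)^n + real n^2 \<le> 2^(m-1)" using assms(3) by (intro far) auto
    then show False using x QF(6,7) KF(3) by linarith
  qed
qed

lemma term_bound:
  fixes \<rho>0 \<epsilon> C :: real
  assumes CB: "\<And>(m::nat) l t. 1 \<le> l \<Longrightarrow> l \<le> 2^m \<Longrightarrow> 0 \<le> t \<Longrightarrow> t \<le> l + 2 * real m^2
      \<Longrightarrow> t \<le> 2^m \<Longrightarrow> (t/2^m) powr (\<rho>0+\<epsilon>) \<le> C * (l/2^m) powr \<rho>0"
    and C0: "0 \<le> C" and r0: "0 \<le> \<rho>0" and nm: "n \<le> m" and ok: "okJ m n Q"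
  shows "(ilen (JJ m n Q)/2^m) powr (\<rho>0+\<epsilon>) \<le> C * (ilen Q/2^n) powr \<rho>0"
proof -
  have p: "(2::real)^n \<le> 2^m" using nm by (intro power_increasing) auto
  have "(0::real) \<le> 2^(n-1)" by simp
  then have l2: "ilen Q \<le> 2^m" using QF(5,6,7) p by linarith
  have "real n^2 \<le> real m^2" using nm by (intro power_mono) auto
  moreover have "1 \<le> real m^2" using nm n1 by simp
  ultimately have t2: "ilen (JJ m n Q) \<le> ilen Q + 2 * real m^2"
    using J_props(4)[OF ok] KF(3) by linarith
  have "(ilen (JJ m n Q)/2^m) powr (\<rho>0+\<epsilon>) \<le> C * (ilen Q/2^m) powr \<rho>0"
    by (rule CB[OF QF(3) l2 J_props(3)[OF ok] t2 J_props(5)[OF ok]])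
  also have "\<dots> \<le> C * (ilen Q/2^n) powr \<rho>0"
    using C0 r0 QF(3) p by (intro mult_left_mono powr_mono2 divide_left_mono) auto
  finally show ?thesis .
qed

end


lemma half_sum_bound:
  fixes C :: real and f g :: "real set \<Rightarrow> real" and A F :: "real set set"
  assumes "finite F" "A \<subseteq> F" "\<And>Q. Q \<in> A \<Longrightarrow> 0 \<le> f (h Q)" "\<And>Q. Q \<in> A \<Longrightarrow> f (h Q) \<le> C * g Q"
    "\<And>Q. Q \<in> F \<Longrightarrow> 0 \<le> g Q" "0 \<le> C"
  shows "sum f (h ` A) \<le> C * sum g F"
proof -
  have fA: "finite A" using assms(1,2) finite_subset by blast
  have "sum f (h ` A) \<le> sum (f \<circ> h) A" using fA assms(3) by (rule sum_image_le)
  also have "\<dots> \<le> sum (\<lambda>Q. C * g Q) A" using assms(4) by (intro sum_mono) auto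
  also have "\<dots> = C * sum g A" by (simp add: sum_distrib_left)
  also have "\<dots> \<le> C * sum g F" using assms by (intro mult_left_mono sum_mono2) auto
  finally show ?thesis .
qed

lemma construct:
  assumes r0D: "\<rho>0 \<in> D E" and e: "0 < \<epsilon>"
  shows "\<exists>R::nat \<Rightarrow> real set set. (\<forall>n\<ge>1. (\<forall>Q\<in>R n. int_interval Q \<and> (\<exists>k::nat. k \<ge> 1 \<and> ilen Q = real (k * n ^ 2)))
                 \<and> E \<inter> shell n \<subseteq> \<Union>(R n)) \<and> \<rho>0 + \<epsilon> \<in> D (\<Union>n\<in>{1..}. \<Union>(R n))"
proof -
  have r0: "0 \<le> \<rho>0" and sumE: "summable (\<lambda>n. nu (Suc n) \<rho>0 E)" using r0D unfolding D_def by auto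
  obtain C where C0: "C \<ge> 0" and CB: "\<And>(m::nat) l t. 1 \<le> l \<Longrightarrow> l \<le> 2^m \<Longrightarrow> 0 \<le> t \<Longrightarrow> t \<le> l + 2 * real m^2
      \<Longrightarrow> t \<le> 2^m \<Longrightarrow> (t/2^m) powr (\<rho>0+\<epsilon>) \<le> C * (l/2^m) powr \<rho>0"
    using cost_bound[OF r0 e] by blast
  have "\<forall>n. \<exists>F. cov n E F \<and> cost n \<rho>0 F < nu n \<rho>0 E + (1/2)^n"
    using nu_approx by simp
  then obtain F where F: "\<And>n. cov n E (F n)" "\<And>n. cost n \<rho>0 (F n) < nu n \<rho>0 E + (1/2)^n" by metis
  define F' where "F' n = {Q \<in> F n. Q \<noteq> {}}" for n
  have ctx: "Qctx n Q" if "Q \<in> F' n" "1 \<le> n" for n Q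
    using that F(1)[of n] unfolding F'_def cov_def by unfold_locales auto
  have finF: "finite (F n)" for n using F(1)[of n] unfolding cov_def by auto
  have finF': "finite (F' n)" for n using finF[of n] unfolding F'_def by auto
  define R where "R n = PP n ` F' n" for n
  define G where "G = (\<Union>n\<in>{1..}. \<Union>(R n))"
  have valid: "\<forall>n\<ge>1. (\<forall>Q\<in>R n. int_interval Q \<and> (\<exists>k::nat. k \<ge> 1 \<and> ilen Q = real (k * n ^ 2)))
                 \<and> E \<inter> shell n \<subseteq> \<Union>(R n)"
  proof (intro allI impI conjI)
    fix n :: nat assume n: "1 \<le> n"
    show "\<forall>Q\<in>R n. int_interval Q \<and> (\<exists>k::nat. k \<ge> 1 \<and> ilen Q = real (k * n ^ 2))"
    proof
    fix Q' assume "Q' \<in> R n"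
    then obtain Q where Q: "Q \<in> F' n" "Q' = PP n Q" unfolding R_def by auto
    show "int_interval Q' \<and> (\<exists>k::nat. k \<ge> 1 \<and> ilen Q' = real (k * n ^ 2))"
      using Qctx.P_ok[OF ctx[OF Q(1) n]] Q(2) by simp
    qed
  next
    fix n :: nat assume n: "1 \<le> n"
    show "E \<inter> shell n \<subseteq> \<Union>(R n)"
    proof
      fix x assume x: "x \<in> E \<inter> shell n"
      then obtain Q where Q: "Q \<in> F n" "x \<in> Q" using F(1)[of n] unfolding cov_def by blast
      then have Q': "Q \<in> F' n" unfolding F'_def by auto
      have "x \<in> PP n Q" using Qctx.Q_sub_P[OF ctx[OF Q' n]] Q(2) by auto
      then show "x \<in> \<Union>(R n)" using Q' unfolding R_def by auto
    qed
  qed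
  define c where "c n = cost n \<rho>0 (F n)" for n
  have c0: "0 \<le> c n" for n unfolding c_def by (rule cost_nonneg)
  have main: "nu m (\<rho>0+\<epsilon>) G \<le> C * (c m + c (m-1))" if m6: "6 \<le> m" for m
  proof -
    define A where "A = {Q\<in>F' m. okJ m m Q}"
    define B where "B = {Q\<in>F' (m-1). okJ m (m-1) Q}"
    define Cv where "Cv = JJ m m ` A \<union> JJ m (m-1) ` B"
    have m1: "1 \<le> m" "1 \<le> m - 1" using m6 by auto
    have ctxA: "Qctx m Q" "okJ m m Q" if "Q \<in> A" for Q using that ctx m1 unfolding A_def by auto
    have ctxB: "Qctx (m-1) Q" "okJ m (m-1) Q" if "Q \<in> B" for Q using that ctx m1 unfolding B_def by auto
    have finA: "finite A" "finite B" using finF' unfolding A_def B_def by auto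
    have "cov m G Cv"
      unfolding cov_def
    proof (intro conjI)
      show "finite Cv" unfolding Cv_def using finA by auto
      show "\<forall>Q\<in>Cv. int_interval Q \<and> Q \<subseteq> shell m"
        unfolding Cv_def using Qctx.J_props(1,2)[OF ctxA(1) ctxA(2)] Qctx.J_props(1,2)[OF ctxB(1) ctxB(2)]
        by blast
      show "G \<inter> shell m \<subseteq> \<Union>Cv"
      proof
        fix x assume x: "x \<in> G \<inter> shell m"
        then obtain n Q where n: "1 \<le> n" and Q: "Q \<in> F' n" "x \<in> PP n Q" unfolding G_def R_def by auto
        interpret q: Qctx n Q by (rule ctx[OF Q(1) n])
        have "n \<le> m" "m \<le> n + 1" using q.location[OF Q(2) _ m6] x by auto
        then have "n = m \<or> n = m - 1" by auto
        moreover have "okJ m n Q" "x \<in> JJ m n Q" using q.J_cover[OF Q(2) _ m1(1)] x by auto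
        ultimately show "x \<in> \<Union>Cv" unfolding Cv_def A_def B_def using Q(1) by auto
      qed
    qed
    then have "nu m (\<rho>0+\<epsilon>) G \<le> cost m (\<rho>0+\<epsilon>) Cv" by (rule nu_le)
    also have "\<dots> \<le> cost m (\<rho>0+\<epsilon>) (JJ m m ` A) + cost m (\<rho>0+\<epsilon>) (JJ m (m-1) ` B)"
    proof -
      have "cost m (\<rho>0+\<epsilon>) Cv = cost m (\<rho>0+\<epsilon>) (JJ m m ` A) + cost m (\<rho>0+\<epsilon>) (JJ m (m-1) ` B)
          - (\<Sum>Q\<in>JJ m m ` A \<inter> JJ m (m-1) ` B. (ilen Q / 2 ^ m) powr (\<rho>0+\<epsilon>))"
        unfolding Cv_def cost_def using finA by (intro sum_Un) auto
      moreover have "0 \<le> (\<Sum>Q\<in>JJ m m ` A \<inter> JJ m (m-1) ` B. (ilen Q / 2 ^ m) powr (\<rho>0+\<epsilon>))"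
        by (intro sum_nonneg) auto
      ultimately show ?thesis by linarith
    qed
    also have "cost m (\<rho>0+\<epsilon>) (JJ m m ` A) \<le> C * c m"
      unfolding cost_def c_def
      by (rule half_sum_bound[OF finF[of m]]) (auto simp: A_def F'_def C0 intro!: Qctx.term_bound[OF ctxA(1) CB C0 r0 _ ctxA(2)])
    also have "cost m (\<rho>0+\<epsilon>) (JJ m (m-1) ` B) \<le> C * c (m-1)"
      unfolding cost_def c_def
    proof (rule half_sum_bound[OF finF[of "m-1"]])
      show "B \<subseteq> F (m-1)" unfolding B_def F'_def by auto
      show "(ilen (JJ m (m-1) Q) / 2 ^ m) powr (\<rho>0+\<epsilon>) \<le> C * (ilen Q / 2 ^ (m-1)) powr \<rho>0" if "Q \<in> B" for Q
        by (rule Qctx.term_bound[OF ctxB(1)[OF that] CB C0 r0 _ ctxB(2)[OF that]]) auto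
    qed (auto simp: C0)
    finally show ?thesis by (simp add: algebra_simps)
  qed
  have sc: "summable c"
  proof -
    have "summable (\<lambda>n. nu n \<rho>0 E)" using sumE by (subst summable_Suc_iff[symmetric])
    then have "summable (\<lambda>n. nu n \<rho>0 E + (1/2)^n)" by (intro summable_add) (auto simp: summable_geometric)
    then show ?thesis
      by (rule summable_comparison_test'[where N=0]) (use F(2) c0 in \<open>auto simp: c_def less_imp_le\<close>)
  qed
  have "summable (\<lambda>n. C * (c (Suc n) + c (Suc n - 1)))"
    using sc by (intro summable_mult summable_add) (auto simp: summable_Suc_iff)
  then have "summable (\<lambda>n. nu (Suc n) (\<rho>0+\<epsilon>) G)"
  proof (rule summable_comparison_test'[where N=5])
    fix n :: nat assume "5 \<le> n"
    then have "nu (Suc n) (\<rho>0+\<epsilon>) G \<le> C * (c (Suc n) + c (Suc n - 1))" by (intro main) auto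
    then show "norm (nu (Suc n) (\<rho>0+\<epsilon>) G) \<le> C * (c (Suc n) + c (Suc n - 1))"
      using nu_nonneg[of "Suc n" "\<rho>0+\<epsilon>" G] by simp
  qed
  then have "\<rho>0 + \<epsilon> \<in> D G" unfolding D_def using r0 e by auto
  then show ?thesis using valid unfolding G_def by blast
qed


theorem lemma6:
  fixes E :: "real set"
  assumes "E \<subseteq> {0<..}"
  shows "DimH E = Inf {DimH (\<Union>n\<in>{1..}. \<Union>(R n)) | R :: nat \<Rightarrow> real set set.
           \<forall>n\<ge>1. (\<forall>Q\<in>R n. int_interval Q \<and> (\<exists>k::nat. k \<ge> 1 \<and> ilen Q = real (k * n ^ 2)))
                 \<and> E \<inter> shell n \<subseteq> \<Union>(R n)}" (is "_ = Inf ?S")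
proof -
  define V where "V R \<longleftrightarrow> (\<forall>n\<ge>1. (\<forall>Q\<in>R n. int_interval Q \<and> (\<exists>k::nat. k \<ge> 1 \<and> ilen Q = real (k * n ^ 2)))
                 \<and> E \<inter> shell n \<subseteq> \<Union>(R n))" for R :: "nat \<Rightarrow> real set set"
  define GG where "GG R = (\<Union>n\<in>{1..}. \<Union>(R n))" for R :: "nat \<Rightarrow> real set set"
  define S where "S = DimH ` GG ` {R. V R}"
  have S_eq: "?S = S" unfolding S_def V_def GG_def by auto
  have cons: "\<exists>R. V R \<and> \<rho>0 + \<epsilon> \<in> D (GG R)" if "\<rho>0 \<in> D E" "0 < \<epsilon>" for \<rho>0 \<epsilon>
    using construct[OF that] unfolding V_def GG_def .
  have ne: "S \<noteq> {}"
  proof -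
    obtain R where "V R" using cons[OF two_D[of E], of 1] by auto
    then show ?thesis unfolding S_def by auto
  qed
  have bdd: "bdd_below S" unfolding S_def by (rule bdd_belowI[of _ 0]) (auto simp: DimH_nonneg)
  have DEne: "D E \<noteq> {}" using two_D[of E] by blast
  have lower: "DimH E \<le> y" if "y \<in> S" for y
  proof -
    obtain R where R: "y = DimH (GG R)" "V R" using \<open>y \<in> S\<close> unfolding S_def by auto
    define G where "G = GG R"
    have sub: "D G \<subseteq> D E"
    proof
      fix \<rho> assume "\<rho> \<in> D G"
      then have r: "0 \<le> \<rho>" "summable (\<lambda>n. nu (Suc n) \<rho> G)" unfolding D_def by auto
      have "summable (\<lambda>n. nu (Suc n) \<rho> E)"
      proof (rule summable_comparison_test'[where N=0])
        show "summable (\<lambda>n. nu (Suc n) \<rho> G)" by (rule r(2))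
        fix n :: nat
        have "E \<inter> shell (Suc n) \<subseteq> \<Union>(R (Suc n))" using R(2) unfolding V_def by simp
        moreover have "\<Union>(R (Suc n)) \<subseteq> G" unfolding G_def GG_def by (intro UN_upper) auto
        ultimately have "E \<inter> shell (Suc n) \<subseteq> G" by blast
        then have "nu (Suc n) \<rho> E \<le> nu (Suc n) \<rho> G" by (rule nu_mono)
        then show "norm (nu (Suc n) \<rho> E) \<le> nu (Suc n) \<rho> G" using nu_nonneg[of "Suc n" \<rho> E] by simp
      qed
      then show "\<rho> \<in> D E" using r unfolding D_def by auto
    qed
    have "D G \<noteq> {}" using two_D[of G] by blast
    then have "Inf (D E) \<le> Inf (D G)" using D_bdd[of E] sub by (rule cInf_superset_mono)
    then show ?thesis unfolding R(1) DimH_D G_def .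
  qed
  have A: "DimH E \<le> Inf S" using ne lower by (rule cInf_greatest)
  have B: "Inf S \<le> DimH E"
  proof (rule field_le_epsilon)
    fix e :: real assume e: "0 < e"
    have "Inf (D E) < DimH E + e/2" using e unfolding DimH_D by simp
    then obtain \<rho>0 where r0: "\<rho>0 \<in> D E" "\<rho>0 < DimH E + e/2" using cInf_lessD[OF DEne] by blast
    have "e/2 > 0" using e by simp
    then obtain R where R: "V R" "\<rho>0 + e/2 \<in> D (GG R)" using cons[OF r0(1)] by blast
    have "DimH (GG R) \<le> \<rho>0 + e/2" unfolding DimH_D using R(2) D_bdd by (rule cInf_lower)
    moreover have "DimH (GG R) \<in> S" using R(1) unfolding S_def by auto
    then have "Inf S \<le> DimH (GG R)" using bdd by (rule cInf_lower)
    ultimately show "Inf S \<le> DimH E + e" using r0(2) by linarith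
  qed
  show ?thesis unfolding S_eq using A B by linarith
qed

end
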